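(* Let $H=(V,E)$ be an $n$-uniform hypergraph, $r\ge 2$, and $k\ge 1$. The number of sequences $(C_1,\dots,C_k)$ of edges of $H$ for which there exist an injective $\sigma:V\to[0,1)$ and a color $i\in\{k,\dots,r\}$ such that $(C_1,\dots,C_k)$ is an ordered $k$-chain for color $i$ is at most $2\binom{|E|}{k}$.
   Context: Setting: $n\ge 3$, $r\ge2$ integers, $H=(V,E)$ an $n$-uniform hypergraph, colors $\{1,\dots,r\}$. Put $p=\frac{r-1}{r}\cdot\frac{\ln(n/\ln n)}{n}$. Partition $[0,1)$ into consecutive half-open intervals $\Delta_1,\delta_1,\Delta_2,\delta_2,\dots,\delta_{r-1},\Delta_r$ (left to right), $\Delta_i=\big[(i-1)(\tfrac{1-p}{r}+\tfrac{p}{r-1}),\ i\tfrac{1-p}{r}+(i-1)\tfrac{p}{r-1}\big)$, $\delta_i=\big[i\tfrac{1-p}{r}+(i-1)\tfrac{p}{r-1},\ i(\tfrac{1-p}{r}+\tfrac{p}{r-1})\big)$. For injective $\sigma:V\to[0,1)$, a vertex $v$ belongs to interval $I$ if $\sigma(v)\in I$; the first (last) vertex of a vertex set is its vertex of smallest (largest) weight. Algorithm 1: every vertex in $\Delta_i$ gets color $i$; then vertices in $\bigcup_i\delta_i$ are processed in increasing weight order, and $v\in\delta_i$ gets color $i$ unless some edge containing $v$ has all its other vertices already colored $i$, in which case $v$ gets color $i+1$; the result is $C^0$. For $1\le k\le i\le r$, a sequence $(C_1,\dots,C_k)$ of edges is an ordered $k$-chain for color $i$ if: (a) the first vertex of $C_1$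 lies in $\Delta_{i-k+1}$; (b) for each $j=1,\dots,k-1$, the last vertex of $C_j$ equals the first vertex of $C_{j+1}$, lies in $\delta_{i-k+j}$, and all vertices of $C_j$ other than its last vertex have color $i-k+j$ in $C^0$; (c) all vertices of $C_k$ have color $i$ in $C^0$. *)

theory Defs
  imports Complex_Main
begin

definition pval :: "nat \<Rightarrow> nat \<Rightarrow> real" where
  "pval n r = (real r - 1) / real r * (ln (real n / ln (real n)) / real n)"

definition BigDelta :: "nat \<Rightarrow> nat \<Rightarrow> nat \<Rightarrow> real set" where
  "BigDelta n r i = (let p = pval n r in
     {(real i - 1) * ((1 - p) / real r + p / (real r - 1)) ..<
      real i * ((1 - p) / real r) + (real i - 1) * (p / (real r - 1))})"

definition SmallDelta :: "nat \<Rightarrow> nat \<Rightarrow> nat \<Rightarrow> real set" where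
  "SmallDelta n r i = (let p = pval n r in
     {real i * ((1 - p) / real r) + (real i - 1) * (p / (real r - 1)) ..<
      real i * ((1 - p) / real r + p / (real r - 1))})"

definition first_vx :: "('a \<Rightarrow> real) \<Rightarrow> 'a set \<Rightarrow> 'a" where
  "first_vx \<sigma> e = (THE v. v \<in> e \<and> (\<forall>u\<in>e. \<sigma> v \<le> \<sigma> u))"

definition last_vx :: "('a \<Rightarrow> real) \<Rightarrow> 'a set \<Rightarrow> 'a" where
  "last_vx \<sigma> e = (THE v. v \<in> e \<and> (\<forall>u\<in>e. \<sigma> u \<le> \<sigma> v))"

text \<open>Algorithm 1. Colours are 1..r; 0 means "not (yet) coloured".
  Step 1: every vertex in Delta_i gets colour i.\<close>
definition init_col :: "nat \<Rightarrow> nat \<Rightarrow> 'a set \<Rightarrow> ('a \<Rightarrow> real) \<Rightarrow> 'a \<Rightarrow> nat" where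
  "init_col n r V \<sigma> v =
     (if v \<in> V \<and> (\<exists>i\<in>{1..r}. \<sigma> v \<in> BigDelta n r i)
      then (THE i. i \<in> {1..r} \<and> \<sigma> v \<in> BigDelta n r i) else 0)"

definition alg_step :: "nat \<Rightarrow> nat \<Rightarrow> 'a set set \<Rightarrow> ('a \<Rightarrow> real)
    \<Rightarrow> ('a \<Rightarrow> nat) \<Rightarrow> 'a \<Rightarrow> ('a \<Rightarrow> nat)" where
  "alg_step n r E \<sigma> c v =
     (let i = (THE i. i \<in> {1..r-1} \<and> \<sigma> v \<in> SmallDelta n r i) in
      c(v := (if \<exists>e\<in>E. v \<in> e \<and> (\<forall>u\<in>e - {v}. c u = i) then i + 1 else i)))"

definition C0 :: "nat \<Rightarrow> nat \<Rightarrow> 'a set \<Rightarrow> 'a set set \<Rightarrow> ('a \<Rightarrow> real) \<Rightarrow> 'a \<Rightarrow> nat" where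
  "C0 n r V E \<sigma> =
     foldl (alg_step n r E \<sigma>) (init_col n r V \<sigma>)
       (filter (\<lambda>v. \<exists>i\<in>{1..r-1}. \<sigma> v \<in> SmallDelta n r i)
          (sorted_key_list_of_set \<sigma> V))"

text \<open>Ordered k-chain for colour i; the list Cs = [C_1,...,C_k] (0-based indices).\<close>
definition ordered_chain ::
  "nat \<Rightarrow> nat \<Rightarrow> 'a set \<Rightarrow> 'a set set \<Rightarrow> ('a \<Rightarrow> real) \<Rightarrow> nat \<Rightarrow> nat \<Rightarrow> 'a set list \<Rightarrow> bool" where
  "ordered_chain n r V E \<sigma> k i Cs \<longleftrightarrow>
     1 \<le> k \<and> k \<le> i \<and> i \<le> r \<and> length Cs = k \<and> set Cs \<subseteq> E \<and>
     \<sigma> (first_vx \<sigma> (Cs ! 0)) \<in> BigDelta n r (i - k + 1) \<and>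
     (\<forall>j. 1 \<le> j \<and> j \<le> k - 1 \<longrightarrow>
        last_vx \<sigma> (Cs ! (j - 1)) = first_vx \<sigma> (Cs ! j) \<and>
        \<sigma> (last_vx \<sigma> (Cs ! (j - 1))) \<in> SmallDelta n r (i - k + j) \<and>
        (\<forall>v \<in> Cs ! (j - 1) - {last_vx \<sigma> (Cs ! (j - 1))}.
            C0 n r V E \<sigma> v = i - k + j)) \<and>
     (\<forall>v \<in> Cs ! (k - 1). C0 n r V E \<sigma> v = i)"

end

theory Submission
  imports Defs
begin

lemma first_vx_props:
  assumes "finite e" "e \<noteq> {}" "inj_on \<sigma> e"
  shows "first_vx \<sigma> e \<in> e \<and> (\<forall>u\<in>e. \<sigma> (first_vx \<sigma> e) \<le> \<sigma> u)"
proof -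
  obtain v where v: "v \<in> e" "\<sigma> v = Min (\<sigma> ` e)"
    proof -
    have "Min (\<sigma> ` e) \<in> \<sigma> ` e" using assms by simp
    then show ?thesis using that by (metis imageE)
  qed
  have P: "v \<in> e \<and> (\<forall>u\<in>e. \<sigma> v \<le> \<sigma> u)" using v assms by auto
  have "first_vx \<sigma> e = v"
    unfolding first_vx_def
  proof (rule the_equality)
    show "v \<in> e \<and> (\<forall>u\<in>e. \<sigma> v \<le> \<sigma> u)" by (rule P)
    fix w assume "w \<in> e \<and> (\<forall>u\<in>e. \<sigma> w \<le> \<sigma> u)"
    then have "w \<in> e" "\<sigma> w = \<sigma> v" using P by (auto intro: order.antisym)
    then show "w = v" using assms(3) v(1) by (meson inj_onD)
  qed
  then show ?thesis using P by simp
qed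

lemma last_vx_props:
  assumes "finite e" "e \<noteq> {}" "inj_on \<sigma> e"
  shows "last_vx \<sigma> e \<in> e \<and> (\<forall>u\<in>e. \<sigma> u \<le> \<sigma> (last_vx \<sigma> e))"
proof -
  obtain v where v: "v \<in> e" "\<sigma> v = Max (\<sigma> ` e)"
    proof -
    have "Max (\<sigma> ` e) \<in> \<sigma> ` e" using assms by simp
    then show ?thesis using that by (metis imageE)
  qed
  have P: "v \<in> e \<and> (\<forall>u\<in>e. \<sigma> u \<le> \<sigma> v)" using v assms by auto
  have "last_vx \<sigma> e = v"
    unfolding last_vx_def
  proof (rule the_equality)
    show "v \<in> e \<and> (\<forall>u\<in>e. \<sigma> u \<le> \<sigma> v)" by (rule P)
    fix w assume "w \<in> e \<and> (\<forall>u\<in>e. \<sigma> u \<le> \<sigma> w)"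
    then have "w \<in> e" "\<sigma> w = \<sigma> v" using P by (auto intro: order.antisym)
    then show "w = v" using assms(3) v(1) by (meson inj_onD)
  qed
  then show ?thesis using P by simp
qed

lemma first_ne_last:
  assumes "finite e" "card e \<ge> 2" "inj_on \<sigma> e"
  shows "first_vx \<sigma> e \<noteq> last_vx \<sigma> e"
proof
  assume eq: "first_vx \<sigma> e = last_vx \<sigma> e"
  have ne: "e \<noteq> {}" using assms by auto
  note F = first_vx_props[OF assms(1) ne assms(3)]
  note L = last_vx_props[OF assms(1) ne assms(3)]
  have "\<forall>u\<in>e. u = first_vx \<sigma> e"
  proof
    fix u assume "u \<in> e"
    then have "\<sigma> u = \<sigma> (first_vx \<sigma> e)" using F L eq by (metis order.antisym)
    then show "u = first_vx \<sigma> e" using assms(3) F \<open>u \<in> e\<close> by (meson inj_onD)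
  qed
  then have "e \<subseteq> {first_vx \<sigma> e}" by auto
  then have "card e \<le> 1" using card_mono[of "{first_vx \<sigma> e}" e] by simp
  then show False using assms(2) by simp
qed

lemma path_unique:
  assumes dx: "distinct xs" and dy: "distinct ys" and st: "set xs = set ys"
    and hx: "\<forall>a b. a < length xs \<longrightarrow> b < length xs \<longrightarrow> R (xs!a) (xs!b) \<longrightarrow> a \<le> b+1 \<and> b \<le> a+1"
    and hy: "\<forall>a. a+1 < length ys \<longrightarrow> R (ys!a) (ys!(a+1))"
  shows "ys = xs \<or> ys = rev xs"
proof -
  define k where "k = length xs"
  have ky: "length ys = k" using distinct_card[OF dx] distinct_card[OF dy] st k_def by simp
  define \<pi> where "\<pi> a = (SOME b. b < k \<and> xs!b = ys!a)" for a
  have ex: "\<exists>b. b < k \<and> xs!b = ys!a" if "a < k" for a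
  proof -
    have "ys!a \<in> set xs" using st ky that by simp
    then show ?thesis unfolding k_def by (simp add: in_set_conv_nth)
  qed
  have \<pi>: "\<pi> a < k \<and> xs!(\<pi> a) = ys!a" if "a < k" for a
    unfolding \<pi>_def using someI_ex[OF ex[OF that]] .
  have inj: "a = b" if "a < k" "b < k" "\<pi> a = \<pi> b" for a b
  proof -
    have "ys!a = ys!b" using \<pi>[OF that(1)] \<pi>[OF that(2)] that(3) by simp
    then show ?thesis using nth_eq_iff_index_eq[OF dy] that ky by simp
  qed
  define d where "d a = int (\<pi> (a+1)) - int (\<pi> a)" for a
  have dstep: "d a = 1 \<or> d a = -1" if "a + 1 < k" for a
  proof -
    have "R (xs!(\<pi> a)) (xs!(\<pi> (a+1)))" using hy \<pi> that ky by simp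
    then have "\<pi> a \<le> \<pi> (a+1) + 1 \<and> \<pi> (a+1) \<le> \<pi> a + 1" using hx \<pi> that k_def by simp
    moreover have "\<pi> a \<noteq> \<pi> (a+1)"
    proof
      assume "\<pi> a = \<pi> (a+1)"
      from inj[of a "a+1", OF _ _ this] that show False by simp
    qed
    ultimately show ?thesis unfolding d_def by linarith
  qed
  have dconst: "d a = d 0" if "a + 1 < k" for a
    using that
  proof (induction a)
    case 0 then show ?case by simp
  next
    case (Suc a)
    have "\<pi> (a+2) \<noteq> \<pi> a"
    proof
      assume "\<pi> (a+2) = \<pi> a"
      from inj[of "a+2" a, OF _ _ this] Suc.prems show False by simp
    qed
    then have "d (Suc a) = d a" using dstep[of a] dstep[of "Suc a"] Suc.prems unfolding d_def
      by (auto simp: numeral_2_eq_2)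
    then show ?case using Suc by simp
  qed
  have form: "int (\<pi> a) = int (\<pi> 0) + int a * d 0" if "a < k" for a
    using that
  proof (induction a)
    case 0 then show ?case by simp
  next
    case (Suc a)
    have "d a = d 0" using dconst[of a] Suc.prems by simp
    then show ?case using Suc unfolding d_def by (simp add: algebra_simps)
  qed
  show ?thesis
  proof (cases "k \<le> 1")
    case True
    then show ?thesis
    proof (cases "k = 0")
      case True then show ?thesis using ky k_def by simp
    next
      case False
      then have "k = 1" using True by simp
      then have "\<pi> 0 = 0" using \<pi>[of 0] by simp
      then have "ys = xs" using \<pi>[of 0] \<open>k = 1\<close> ky k_def by (intro nth_equalityI) auto
      then show ?thesis by simp
    qed
  next
    case False
    have pk: "\<pi> (k-1) < k" "\<pi> 0 < k" using \<pi>[of "k-1"] \<pi>[of 0] False by auto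
    have fk: "int (\<pi> (k-1)) = int (\<pi> 0) + int (k-1) * d 0" using form[of "k-1"] False by simp
    have "d 0 = 1 \<or> d 0 = -1" using dstep[of 0] False by simp
    then show ?thesis
    proof
      assume "d 0 = 1"
      then have "int (\<pi> (k-1)) = int (\<pi> 0) + int (k-1)" using fk by simp
      then have "\<pi> 0 = 0" using pk False by linarith
      then have "\<And>a. a < k \<Longrightarrow> \<pi> a = a"
        proof -
          fix a assume "a < k"
          from form[OF this] \<open>d 0 = 1\<close> \<open>\<pi> 0 = 0\<close> show "\<pi> a = a" by simp
        qed
      then have "ys = xs" using \<pi> ky k_def by (intro nth_equalityI) auto
      then show ?thesis by simp
    next
      assume "d 0 = -1"
      then have "int (\<pi> (k-1)) = int (\<pi> 0) - int (k-1)" using fk by simp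
      then have "\<pi> 0 = k - 1" using pk False by linarith
      then have "\<And>a. a < k \<Longrightarrow> \<pi> a = k - 1 - a"
        proof -
          fix a assume "a < k"
          from form[OF this] \<open>d 0 = -1\<close> \<open>\<pi> 0 = k - 1\<close> \<open>a < k\<close> show "\<pi> a = k - 1 - a" by simp
        qed
      then have "ys = rev xs" using \<pi> ky k_def
        by (intro nth_equalityI) (auto simp: rev_nth)
      then show ?thesis by simp
    qed
  qed
qed

lemma chain_props:
  assumes oc: "ordered_chain n r V E \<sigma> k i Cs" and inj: "inj_on \<sigma> V" and fin: "finite V"
    and hE: "\<forall>e\<in>E. e \<subseteq> V \<and> card e = n" and n3: "n \<ge> 3"
  shows "distinct Cs \<and> (\<forall>a b. a < length Cs \<longrightarrow> b < length Cs \<longrightarrow> Cs!a \<inter> Cs!b \<noteq> {} \<longrightarrow> a \<le> b+1 \<and> b \<le> a+1)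
     \<and> (\<forall>a. a+1 < length Cs \<longrightarrow> Cs!a \<inter> Cs!(a+1) \<noteq> {})"
proof -
  define col where "col = C0 n r V E \<sigma>"
  define fv where "fv t = first_vx \<sigma> (Cs!t)" for t
  define lv where "lv t = last_vx \<sigma> (Cs!t)" for t
  have k1: "1 \<le> k" and ki: "k \<le> i" and len: "length Cs = k" and sub: "set Cs \<subseteq> E"
    using oc unfolding ordered_chain_def by auto
  have mid: "\<And>j. 1 \<le> j \<Longrightarrow> j \<le> k - 1 \<Longrightarrow>
        last_vx \<sigma> (Cs ! (j - 1)) = first_vx \<sigma> (Cs ! j) \<and>
        (\<forall>v \<in> Cs ! (j - 1) - {last_vx \<sigma> (Cs ! (j - 1))}. col v = i - k + j)"
    using oc unfolding ordered_chain_def col_def by blast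
  have lastc: "\<forall>v \<in> Cs ! (k - 1). col v = i"
    using oc unfolding ordered_chain_def col_def by blast
  have edge: "fv t \<in> Cs!t \<and> lv t \<in> Cs!t \<and> fv t \<noteq> lv t" if "t < k" for t
  proof -
    have "Cs!t \<in> E" using sub that len by auto
    then have e: "Cs!t \<subseteq> V" "card (Cs!t) = n" using hE by auto
    then have f: "finite (Cs!t)" using fin finite_subset by blast
    have ne: "Cs!t \<noteq> {}" using e n3 by auto
    have ij: "inj_on \<sigma> (Cs!t)" using inj e inj_on_subset by blast
    have c2: "card (Cs!t) \<ge> 2" using e n3 by simp
    show ?thesis unfolding fv_def lv_def
      using first_vx_props[OF f ne ij] last_vx_props[OF f ne ij] first_ne_last[OF f c2 ij] by blast
  qed
  have link: "lv t = fv (t+1)" if "t + 1 < k" for t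
    using mid[of "t+1"] that unfolding lv_def fv_def by simp
  have nonlast: "col v = i - k + t + 1" if "t < k" "v \<in> Cs!t" "v \<noteq> lv t" for t v
  proof (cases "t + 1 < k")
    case True
    then show ?thesis using mid[of "t+1"] that unfolding lv_def by simp
  next
    case False
    then have "t = k - 1" using that by simp
    then show ?thesis using lastc that k1 ki by simp
  qed
  have crange: "col v = i - k + t + 1 \<or> col v = i - k + t + 2" if "t < k" "v \<in> Cs!t" for t v
  proof (cases "v = lv t")
    case False then show ?thesis using nonlast that by simp
  next
    case True
    show ?thesis
    proof (cases "t + 1 < k")
      case True
      have "v = fv (t+1)" using link[OF True] \<open>v = lv t\<close> by simp
      then have "v \<in> Cs!(t+1)" "v \<noteq> lv (t+1)" using edge[OF True] by auto
      then have "col v = i - k + (t+1) + 1" using nonlast True by blast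
      then show ?thesis by simp
    next
      case False
      then have "t = k - 1" using that by simp
      then show ?thesis using lastc that k1 ki by simp
    qed
  qed
  have disj: "Cs!a \<inter> Cs!b = {}" if "a < k" "b < k" "a + 2 \<le> b" for a b
  proof (rule ccontr)
    assume "Cs!a \<inter> Cs!b \<noteq> {}"
    then obtain v where "v \<in> Cs!a" "v \<in> Cs!b" by blast
    then have "col v = i - k + a + 1 \<or> col v = i - k + a + 2" "col v = i - k + b + 1 \<or> col v = i - k + b + 2"
      using crange that by auto
    then show False using that ki by auto
  qed
  have adj: "\<forall>a b. a < length Cs \<longrightarrow> b < length Cs \<longrightarrow> Cs!a \<inter> Cs!b \<noteq> {} \<longrightarrow> a \<le> b+1 \<and> b \<le> a+1"
  proof (intro allI impI)
    fix a b assume "a < length Cs" "b < length Cs" "Cs!a \<inter> Cs!b \<noteq> {}"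
    then show "a \<le> b+1 \<and> b \<le> a+1" proof -
      have "\<not> (a + 2 \<le> b)" using disj[of a b] len \<open>a < length Cs\<close> \<open>b < length Cs\<close> \<open>Cs!a \<inter> Cs!b \<noteq> {}\<close> by blast
      moreover have "\<not> (b + 2 \<le> a)" using disj[of b a] len \<open>a < length Cs\<close> \<open>b < length Cs\<close> \<open>Cs!a \<inter> Cs!b \<noteq> {}\<close> by blast
      ultimately show ?thesis by linarith
    qed
  qed
  have cons: "\<forall>a. a+1 < length Cs \<longrightarrow> Cs!a \<inter> Cs!(a+1) \<noteq> {}"
  proof (intro allI impI)
    fix a assume "a+1 < length Cs"
    then have "lv a \<in> Cs!a" "lv a \<in> Cs!(a+1)" using edge[of a] edge[of "a+1"] link[of a] len by auto
    then show "Cs!a \<inter> Cs!(a+1) \<noteq> {}" by blast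
  qed
  have neq: "Cs!a \<noteq> Cs!b" if "a < k" "b < k" "a < b" for a b
  proof (cases "b = a + 1")
    case True
    show ?thesis
    proof
      assume "Cs!a = Cs!b"
      then have "lv a = fv a" using link[of a] True that unfolding lv_def fv_def by simp
      then show False using edge[of a] that by simp
    qed
  next
    case False
    then have "Cs!a \<inter> Cs!b = {}" using disj that by simp
    then show ?thesis using edge[of a] that by auto
  qed
  have "distinct Cs"
    unfolding distinct_conv_nth
  proof (intro allI impI)
    fix a b assume "a < length Cs" "b < length Cs" "a \<noteq> b"
    then show "Cs!a \<noteq> Cs!b" using neq[of a b] neq[of b a] len by (cases "a < b") auto
  qed
  then show ?thesis using adj cons by blast
qed

lemma card_fibers_le2:
  assumes "finite B" and "\<And>S. S \<in> f ` B \<Longrightarrow> card {x\<in>B. f x = S} \<le> 2"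
  shows "card B \<le> 2 * card (f ` B)"
proof -
  have "B = (\<Union>S\<in>f ` B. {x\<in>B. f x = S})" by auto
  then have "card B \<le> (\<Sum>S\<in>f ` B. card {x\<in>B. f x = S})"
    by (metis card_UN_le assms(1) finite_imageI)
  also have "\<dots> \<le> (\<Sum>S\<in>f ` B. 2)" by (rule sum_mono) (rule assms(2))
  also have "\<dots> = 2 * card (f ` B)" by simp
  finally show ?thesis .
qed

theorem lemma1:
  fixes V :: "'a set" and E :: "'a set set" and n r k :: nat
  assumes "n \<ge> 3" and "r \<ge> 2" and "k \<ge> 1"
    and "finite V" and "\<forall>e\<in>E. e \<subseteq> V \<and> card e = n"
  shows "card {Cs. length Cs = k \<and> set Cs \<subseteq> E \<and>
            (\<exists>\<sigma> :: 'a \<Rightarrow> real. inj_on \<sigma> V \<and> \<sigma> ` V \<subseteq> {0..<1} \<and>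
               (\<exists>i\<in>{k..r}. ordered_chain n r V E \<sigma> k i Cs))}
         \<le> 2 * (card E choose k)"
proof -
  define Ch where "Ch = {Cs. length Cs = k \<and> set Cs \<subseteq> E \<and> distinct Cs \<and>
     (\<forall>a b. a < length Cs \<longrightarrow> b < length Cs \<longrightarrow> Cs!a \<inter> Cs!b \<noteq> {} \<longrightarrow> a \<le> b+1 \<and> b \<le> a+1)
     \<and> (\<forall>a. a+1 < length Cs \<longrightarrow> Cs!a \<inter> Cs!(a+1) \<noteq> {})}"
  have finE: "finite E"
  proof -
    have "E \<subseteq> Pow V" using assms(5) by auto
    then show ?thesis using assms(4) finite_subset by blast
  qed
  have sub: "{Cs. length Cs = k \<and> set Cs \<subseteq> E \<and>
            (\<exists>\<sigma> :: 'a \<Rightarrow> real. inj_on \<sigma> V \<and> \<sigma> ` V \<subseteq> {0..<1} \<and>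
               (\<exists>i\<in>{k..r}. ordered_chain n r V E \<sigma> k i Cs))} \<subseteq> Ch"
  proof
    fix Cs assume "Cs \<in> {Cs. length Cs = k \<and> set Cs \<subseteq> E \<and>
            (\<exists>\<sigma> :: 'a \<Rightarrow> real. inj_on \<sigma> V \<and> \<sigma> ` V \<subseteq> {0..<1} \<and>
               (\<exists>i\<in>{k..r}. ordered_chain n r V E \<sigma> k i Cs))}"
    then obtain \<sigma> :: "'a \<Rightarrow> real" and i where h: "length Cs = k" "set Cs \<subseteq> E" "inj_on \<sigma> V"
      "ordered_chain n r V E \<sigma> k i Cs" by blast
    from chain_props[OF h(4) h(3) assms(4) assms(5) assms(1)] h(1,2)
    show "Cs \<in> Ch" unfolding Ch_def by blast
  qed
  have finCh: "finite Ch"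
  proof -
    have "Ch \<subseteq> {Cs. set Cs \<subseteq> E \<and> length Cs = k}" unfolding Ch_def by blast
    then show ?thesis using finite_lists_length_eq[OF finE] finite_subset by blast
  qed
  have "card Ch \<le> 2 * card (set ` Ch)"
  proof (rule card_fibers_le2[OF finCh])
    fix S assume "S \<in> set ` Ch"
    then obtain x0 where x0: "x0 \<in> Ch" "S = set x0" by blast
    have "{x\<in>Ch. set x = S} \<subseteq> {x0, rev x0}"
    proof
      fix ys assume "ys \<in> {x\<in>Ch. set x = S}"
      then have ys: "ys \<in> Ch" "set ys = set x0" using x0 by auto
      have "ys = x0 \<or> ys = rev x0"
        by (rule path_unique[where R = "\<lambda>A B. A \<inter> B \<noteq> {}"])
           (use ys x0 in \<open>auto simp: Ch_def\<close>)
      then show "ys \<in> {x0, rev x0}" by blast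
    qed
    then have "card {x\<in>Ch. set x = S} \<le> card {x0, rev x0}" by (rule card_mono[rotated]) simp
    also have "\<dots> \<le> 2" by (simp add: card_insert_if)
    finally show "card {x\<in>Ch. set x = S} \<le> 2" .
  qed
  also have "card (set ` Ch) \<le> card {B. B \<subseteq> E \<and> card B = k}"
  proof (rule card_mono)
    show "finite {B. B \<subseteq> E \<and> card B = k}" using finE by simp
    show "set ` Ch \<subseteq> {B. B \<subseteq> E \<and> card B = k}" unfolding Ch_def using distinct_card by fastforce
  qed
  also have "card {B. B \<subseteq> E \<and> card B = k} = card E choose k" by (rule n_subsets[OF finE])
  finally have "card Ch \<le> 2 * (card E choose k)" by simp
  then show ?thesis using card_mono[OF finCh sub] by linarith
qed

end
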